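(* Fix a Bergman tree $\mathcal{T}_n$ with parameter $\lambda>0$. There is a constant $C>0$ (depending only on $n$ and $\lambda$) such that for every $M>0$ and all $\alpha,\alpha'\in\mathcal{T}_n$ with $d(\alpha)=d(\alpha')\ge 1$ and $d(c_\alpha,c_{\alpha'})>M$, we have $$(e^M-1)^{1/2}e^{-\lambda d(\alpha)}\le C\,\beta\!\left(\tfrac{c_\alpha}{|c_\alpha|},\tfrac{c_{\alpha'}}{|c_{\alpha'}|}\right).$$
   Context: Notation: $\mathbb{B}_n$ is the open unit ball of $\mathbb{C}^n$, $z\cdot w=\sum_j z_j\overline{w_j}$. For $z\in\mathbb{B}_n$, $\varphi_z$ is the involutive automorphism of $\mathbb{B}_n$ interchanging $0$ and $z$; the Bergman metric is $d(z,w)=\frac12\log\frac{1+|\varphi_z(w)|}{1-|\varphi_z(w)|}$ (so $d(0,z)=\tanh^{-1}|z|$), and $D(z,r)=\{w:d(z,w)<r\}$. The non-isotropic metric on $\partial\mathbb{B}_n$ is $\beta(\zeta,\eta)=|1-\zeta\cdot\eta|^{1/2}$. Bergman tree with parameter $\lambda>0$: for $r>0$ let $S_r=\{z:d(0,z)=r\}$ and for $z\neq0$ let $P_rz$ be the point of $S_r$ on the ray $\{tz:t>0\}$. For each integer $N\ge1$ fix points $z^N_1,\dots,z^N_{J_N}\in S_{\lambda N}$ and a partition of $S_{\lambda N}$ into Borel sets $Q^N_1,\dots,Q^N_{J_N}$ with $B_N(z^N_j,\lambda/2)\subseteq Q^N_j\subseteq B_N(z^N_j,2\lambda)$, where $B_N(z,s)=S_{\lambda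 N}\cap D(z,s)$. Set $K^N_j=\{z:\lambda N\le d(0,z)<\lambda(N+1),\ P_{\lambda N}z\in Q^N_j\}$ with center $c^N_j=P_{\lambda(N+1/2)}z^N_j$; the root is $K_o=\{z:d(0,z)<\lambda\}$ with center $0$. $\mathcal{T}_n$ is the index set consisting of $o$ and all pairs $\alpha=(N,j)$; write $K_\alpha$, $c_\alpha$ and $d(\alpha)=N$ (with $d(o)=0$). The sets $K_\alpha$ partition $\mathbb{B}_n$. Tree structure: $(N+1,i)$ is a child of $(N,j)$ (for $N\ge1$) if $P_{\lambda N}c^{N+1}_i\in Q^N_j$, and every $(1,j)$ is a child of $o$. Write $\beta\ge\alpha$ if $\beta$ equals $\alpha$ or is a descendant of $\alpha$, and $\beta>\alpha$ if moreover $\beta\neq\alpha$; $\mathcal{C}^\ell(\alpha)=\{\beta\ge\alpha:d(\beta)=d(\alpha)+\ell\}$. *)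

theory Defs
  imports "HOL-Analysis.Analysis"
begin

text \<open>Points of C^n are modelled as vectors of type complex^'n, with n = CARD('n).\<close>

definition cdot :: "complex^'n \<Rightarrow> complex^'n \<Rightarrow> complex" where
  "cdot z w = (\<Sum>j\<in>UNIV. z$j * cnj (w$j))"

definition cscale :: "complex \<Rightarrow> complex^'n \<Rightarrow> complex^'n" where
  "cscale c v = (\<chi> i. c * v$i)"

definition unit_ball :: "(complex^'n) set" where
  "unit_ball = {z. norm z < 1}"

definition projP :: "complex^'n \<Rightarrow> complex^'n \<Rightarrow> complex^'n" where
  "projP a z = (if a = 0 then 0 else cscale (cdot z a / cdot a a) a)"

definition projQ :: "complex^'n \<Rightarrow> complex^'n \<Rightarrow> complex^'n" where
  "projQ a z = z - projP a z"

text \<open>The involutive automorphism interchanging 0 and a (Rudin's formula).\<close>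
definition phi :: "complex^'n \<Rightarrow> complex^'n \<Rightarrow> complex^'n" where
  "phi a z = cscale (1 / (1 - cdot z a))
      (a - projP a z - cscale (complex_of_real (sqrt (1 - (norm a)\<^sup>2))) (projQ a z))"

definition bdist :: "complex^'n \<Rightarrow> complex^'n \<Rightarrow> real" where
  "bdist z w = (1/2) * ln ((1 + norm (phi z w)) / (1 - norm (phi z w)))"

definition bball :: "complex^'n \<Rightarrow> real \<Rightarrow> (complex^'n) set" where
  "bball z r = {w \<in> unit_ball. bdist z w < r}"

definition sphereS :: "real \<Rightarrow> (complex^'n) set" where
  "sphereS r = {z \<in> unit_ball. bdist 0 z = r}"

definition rayP :: "real \<Rightarrow> complex^'n \<Rightarrow> complex^'n" where
  "rayP r z = (THE w. w \<in> sphereS r \<and> (\<exists>t>0. w = t *\<^sub>R z))"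

definition nbeta :: "complex^'n \<Rightarrow> complex^'n \<Rightarrow> real" where
  "nbeta \<zeta> \<eta> = sqrt (cmod (1 - cdot \<zeta> \<eta>))"

definition bergman_tree ::
  "real \<Rightarrow> (nat \<Rightarrow> nat) \<Rightarrow> (nat \<Rightarrow> nat \<Rightarrow> complex^'n) \<Rightarrow> (nat \<Rightarrow> nat \<Rightarrow> (complex^'n) set) \<Rightarrow> bool"
  where
  "bergman_tree lam J zs Q \<longleftrightarrow> lam > 0 \<and>
     (\<forall>N\<ge>1.
        (\<forall>j<J N. zs N j \<in> sphereS (lam * real N)) \<and>
        (\<forall>j<J N. Q N j \<in> sets borel) \<and>
        (\<forall>j<J N. \<forall>j'<J N. j \<noteq> j' \<longrightarrow> Q N j \<inter> Q N j' = {}) \<and>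
        (\<Union>j<J N. Q N j) = sphereS (lam * real N) \<and>
        (\<forall>j<J N. sphereS (lam * real N) \<inter> bball (zs N j) (lam / 2) \<subseteq> Q N j \<and>
                 Q N j \<subseteq> sphereS (lam * real N) \<inter> bball (zs N j) (2 * lam)))"

definition center :: "real \<Rightarrow> (nat \<Rightarrow> nat \<Rightarrow> complex^'n) \<Rightarrow> nat \<Rightarrow> nat \<Rightarrow> complex^'n" where
  "center lam zs N j = rayP (lam * (real N + 1/2)) (zs N j)"

end

theory Submission
  imports Defs
begin


lemma norm_sq_sum: "(norm (z::complex^'n))\<^sup>2 = (\<Sum>i\<in>UNIV. (cmod (z$i))\<^sup>2)"
  unfolding norm_vec_def L2_set_def by (simp add: sum_nonneg)

lemma cdot_self: "cdot z z = complex_of_real ((norm z)\<^sup>2)"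
  unfolding cdot_def norm_sq_sum by (simp add: complex_mult_cnj cmod_def)

lemma cdot_cnj: "cdot w z = cnj (cdot z w)"
  unfolding cdot_def by (simp add: mult.commute)

lemma cdot_scaleR_left: "cdot (x *\<^sub>R a) b = complex_of_real x * cdot a b"
  unfolding cdot_def by (simp add: sum_distrib_left scaleR_conv_of_real[symmetric] mult.assoc)

lemma cdot_scaleR_right: "cdot a (x *\<^sub>R b) = complex_of_real x * cdot a b"
proof -
  have "\<And>j. (x *\<^sub>R b) $ j = complex_of_real x * b $ j"
    by (metis vector_scaleR_component scaleR_conv_of_real)
  then show ?thesis unfolding cdot_def by (simp add: sum_distrib_left algebra_simps)
qed

lemma cdot_expand:
  "cdot (cscale A a - cscale B b) (cscale A a - cscale B b) =
     A * cnj A * cdot a a - A * cnj B * cdot a b - B * cnj A * cdot b a + B * cnj B * cdot b b"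
  unfolding cdot_def cscale_def
  by (simp add: sum_subtractf sum.distrib sum_distrib_left algebra_simps)

lemma norm_cscale: "norm (cscale c v) = cmod c * norm v"
  unfolding norm_vec_def cscale_def by (simp add: norm_mult L2_set_right_distrib)

lemma alg_poly:
  fixes p q S Z :: complex
  shows "(1 - p + S*p) * (1 - q + S*q) * (1 - S*S) - (1 - p + S*p) * S * (q * (1 - S*S))
         - S * (1 - q + S*q) * (p * (1 - S*S)) + S * S * Z
         = (1 - p * (1 - S*S)) * (1 - q * (1 - S*S)) - (1 - (1 - S*S)) * (1 - Z)"
  by algebra

lemma alg_core:
  fixes g h S m Z :: complex
  assumes "m \<noteq> 0" "S * S = 1 - m"
  shows "(1 - g/m + S*(g/m)) * (1 - h/m + S*(h/m)) * m - (1 - g/m + S*(g/m)) * S * h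
         - S * (1 - h/m + S*(h/m)) * g + S * S * Z
         = (1 - g) * (1 - h) - (1 - m) * (1 - Z)"
proof -
  define p where "p = g / m"
  define q where "q = h / m"
  have g: "g = p * (1 - S*S)" using assms by (simp add: p_def)
  have h: "h = q * (1 - S*S)" using assms by (simp add: q_def)
  have m: "m = 1 - S*S" using assms by simp
  show ?thesis unfolding p_def[symmetric] q_def[symmetric]
    unfolding g h m by (rule alg_poly)
qed

lemma v_norm:
  fixes a z :: "complex^'n"
  assumes "a \<noteq> 0" "norm a \<le> 1"
  defines "g \<equiv> cdot z a"
  defines "S \<equiv> complex_of_real (sqrt (1 - (norm a)\<^sup>2))"
  defines "A \<equiv> 1 - g / cdot a a + S * (g / cdot a a)"
  shows "(norm (cscale A a - cscale S z))\<^sup>2 = (cmod (1 - g))\<^sup>2 - (1 - (norm a)\<^sup>2) * (1 - (norm z)\<^sup>2)"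
proof -
  define m where "m = complex_of_real ((norm a)\<^sup>2)"
  define Z where "Z = complex_of_real ((norm z)\<^sup>2)"
  have m0: "m \<noteq> 0" using assms(1) by (simp add: m_def)
  have SS: "S * S = 1 - m"
  proof -
    have "0 \<le> 1 - (norm a)\<^sup>2" using assms(2) norm_ge_zero power_le_one by (simp add: power_le_one)
    then have e: "sqrt (1 - (norm a)\<^sup>2) * sqrt (1 - (norm a)\<^sup>2) = 1 - (norm a)\<^sup>2" by simp
    show ?thesis by (simp only: S_def m_def of_real_mult[symmetric] e of_real_diff of_real_1)
  qed
  have cS: "cnj S = S" by (simp add: S_def)
  have caa: "cdot a a = m" by (simp add: m_def cdot_self)
  have czz: "cdot z z = Z" by (simp add: Z_def cdot_self)
  have caz: "cdot a z = cnj g" by (simp add: g_def cdot_cnj[of a z])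
  have cA: "cnj A = 1 - cnj g / m + S * (cnj g / m)"
    by (simp add: A_def caa cS m_def)
  have "complex_of_real ((norm (cscale A a - cscale S z))\<^sup>2) = cdot (cscale A a - cscale S z) (cscale A a - cscale S z)"
    by (simp add: cdot_self)
  also have "\<dots> = A * cnj A * m - A * S * cnj g - S * cnj A * g + S * S * Z"
    unfolding cdot_expand caa czz caz cS g_def[symmetric] by (rule refl)
  also have "\<dots> = (1 - g) * (1 - cnj g) - (1 - m) * (1 - Z)"
    unfolding cA unfolding A_def caa by (rule alg_core[OF m0 SS])
  also have "\<dots> = complex_of_real ((cmod (1 - g))\<^sup>2 - (1 - (norm a)\<^sup>2) * (1 - (norm z)\<^sup>2))"
    unfolding of_real_diff of_real_mult complex_norm_square m_def Z_def of_real_1 by simp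
  finally show ?thesis by (simp only: of_real_eq_iff)
qed




lemma phi_form:
  fixes a z :: "complex^'n"
  assumes "a \<noteq> 0"
  shows "phi a z = cscale (1 / (1 - cdot z a))
     (cscale (1 - cdot z a / cdot a a + complex_of_real (sqrt (1 - (norm a)\<^sup>2)) * (cdot z a / cdot a a)) a
      - cscale (complex_of_real (sqrt (1 - (norm a)\<^sup>2))) z)"
  using assms unfolding phi_def projP_def projQ_def cscale_def
  by (simp add: vec_eq_iff algebra_simps)

lemma phi_sq:
  fixes a z :: "complex^'n"
  assumes "a \<noteq> 0" "norm a < 1" "norm z < 1"
  shows "cmod (1 - cdot z a) > 0 \<and>
         (norm (phi a z))\<^sup>2 = 1 - (1 - (norm a)\<^sup>2) * (1 - (norm z)\<^sup>2) / (cmod (1 - cdot z a))\<^sup>2 \<and>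
         norm (phi a z) < 1"
proof -
  define v where "v = cscale (1 - cdot z a / cdot a a + complex_of_real (sqrt (1 - (norm a)\<^sup>2)) * (cdot z a / cdot a a)) a
      - cscale (complex_of_real (sqrt (1 - (norm a)\<^sup>2))) z"
  define c where "c = cmod (1 - cdot z a)"
  have vn: "(norm v)\<^sup>2 = c\<^sup>2 - (1 - (norm a)\<^sup>2) * (1 - (norm z)\<^sup>2)"
    unfolding v_def c_def by (rule v_norm) (use assms in auto)
  have pa: "0 < 1 - (norm a)\<^sup>2" using assms(2) by (simp add: power_less_one_iff abs_less_iff)
  have pz: "0 < 1 - (norm z)\<^sup>2" using assms(3) by (simp add: power_less_one_iff abs_less_iff)
  have pp: "0 < (1 - (norm a)\<^sup>2) * (1 - (norm z)\<^sup>2)" using pa pz by simp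
  have c2: "c\<^sup>2 > 0" using vn pp by (smt (verit) zero_le_power2)
  then have c0: "c > 0" unfolding c_def by simp
  have pn: "norm (phi a z) = norm v / c"
    unfolding phi_form[OF assms(1)] v_def[symmetric] c_def norm_cscale
    by (simp add: norm_divide)
  have "(norm (phi a z))\<^sup>2 = (norm v)\<^sup>2 / c\<^sup>2" by (simp add: pn power_divide)
  also have "\<dots> = 1 - (1 - (norm a)\<^sup>2) * (1 - (norm z)\<^sup>2) / c\<^sup>2"
    using c2 by (simp add: vn field_simps)
  finally have e: "(norm (phi a z))\<^sup>2 = 1 - (1 - (norm a)\<^sup>2) * (1 - (norm z)\<^sup>2) / c\<^sup>2" .
  have "(norm (phi a z))\<^sup>2 < 1" unfolding e using pp c2 by simp
  then have "norm (phi a z) < 1" by (simp add: power_less_one_iff abs_less_iff)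
  with e c0 show ?thesis by (simp add: c_def)
qed

lemma phi0: "phi 0 z = - z"
  unfolding phi_def projP_def projQ_def cscale_def cdot_def by (simp add: vec_eq_iff)

definition th :: "real \<Rightarrow> real" where
  "th R = (exp (2*R) - 1) / (exp (2*R) + 1)"

lemma th_lt1: "th R < 1"
  unfolding th_def by (simp add: divide_less_eq add_pos_pos)

lemma th_eq: "th R = 1 - 2 / (exp (2*R) + 1)"
proof -
  have "exp (2*R) + 1 > 0" by (simp add: add_pos_pos)
  then show ?thesis unfolding th_def by (simp add: field_simps)
qed

lemma th_mono: "R \<le> R' \<Longrightarrow> th R \<le> th R'"
  unfolding th_eq by (simp add: frac_le add_pos_pos)

lemma th_pos: "R > 0 \<Longrightarrow> th R > 0"
  unfolding th_def by (simp add: add_pos_pos)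

lemma th_ratio: "(1 + th R) / (1 - th R) = exp (2*R)"
proof -
  have "exp (2*R) + 1 > 0" by (simp add: add_pos_pos)
  then show ?thesis unfolding th_def by (simp add: field_simps)
qed

lemma artanh_iff:
  assumes "0 \<le> x" "x < 1"
  shows "((1/2) * ln ((1 + x) / (1 - x)) = R) \<longleftrightarrow> x = th R"
proof
  assume h: "(1/2) * ln ((1 + x) / (1 - x)) = R"
  have pos: "(1 + x) / (1 - x) > 0" using assms by simp
  have "(1 + x) / (1 - x) = exp (2*R)" using h pos
    by (metis exp_ln mult_2 field_sum_of_halves times_divide_eq_left mult_1 )
  then have "1 + x = exp (2*R) * (1 - x)" using assms by (simp add: field_simps)
  then have "x * (exp (2*R) + 1) = exp (2*R) - 1" by (simp add: algebra_simps)
  moreover have "exp (2*R) + 1 > 0" by (simp add: add_pos_pos)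
  ultimately show "x = th R" unfolding th_def by (simp add: eq_divide_eq)
next
  assume "x = th R"
  then show "(1/2) * ln ((1 + x) / (1 - x)) = R" by (simp add: th_ratio)
qed

lemma bdist_th:
  assumes "norm (phi a z) < 1"
  shows "norm (phi a z) = th (bdist a z)"
  using artanh_iff[of "norm (phi a z)" "bdist a z"] assms unfolding bdist_def by simp

lemma sphere_iff: "w \<in> sphereS R \<longleftrightarrow> norm w = th R"
proof
  assume "w \<in> sphereS R"
  then have "norm w < 1" "bdist 0 w = R" unfolding sphereS_def unit_ball_def by auto
  then show "norm w = th R" using bdist_th[of 0 w] by (simp add: phi0)
next
  assume h: "norm w = th R"
  then have "norm w < 1" using th_lt1 by simp
  have "bdist 0 w = R" unfolding bdist_def phi0 norm_minus_cancel h th_ratio by simp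
  then show "w \<in> sphereS R" using \<open>norm w < 1\<close> unfolding sphereS_def unit_ball_def by auto
qed

lemma rayP_props:
  fixes z :: "complex^'n"
  assumes "R > 0" "z \<noteq> 0"
  shows "rayP R z \<in> sphereS R \<and> (\<exists>t>0. rayP R z = t *\<^sub>R z)"
proof -
  have ex: "\<exists>!w. w \<in> sphereS R \<and> (\<exists>t>0. w = t *\<^sub>R z)"
  proof (rule ex1I)
    show "(th R / norm z) *\<^sub>R z \<in> sphereS R \<and> (\<exists>t>0. (th R / norm z) *\<^sub>R z = t *\<^sub>R z)"
      using assms th_pos[OF assms(1)] by (auto simp: sphere_iff)
  next
    fix w assume w: "w \<in> sphereS R \<and> (\<exists>t>0. w = t *\<^sub>R z)"
    then obtain t where t: "t > 0" "w = t *\<^sub>R z" by auto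
    have "t * norm z = th R" using w t by (simp add: sphere_iff)
    then have "t = th R / norm z" using assms by (simp add: field_simps)
    then show "w = (th R / norm z) *\<^sub>R z" using t by simp
  qed
  show ?thesis unfolding rayP_def by (rule theI'[OF ex])
qed

lemma bdist_self:
  fixes z :: "complex^'n"
  assumes "norm z < 1"
  shows "bdist z z = 0"
proof (cases "z = 0")
  case True then show ?thesis by (simp add: bdist_def phi0)
next
  case False
  have c: "cdot z z = complex_of_real ((norm z)\<^sup>2)" by (rule cdot_self)
  have p: "0 < 1 - (norm z)\<^sup>2" using assms by (simp add: power_less_one_iff abs_less_iff)
  have "cmod (1 - cdot z z) = 1 - (norm z)\<^sup>2" unfolding c using p
    by (metis abs_of_pos norm_of_real of_real_1 of_real_diff)
  then have "(norm (phi z z))\<^sup>2 = 0" using phi_sq[OF False assms assms] p by (simp add: power2_eq_square)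
  then show ?thesis by (simp add: bdist_def)
qed




lemma cmod_bound:
  fixes w :: complex
  assumes "0 \<le> s2" "s2 \<le> 1"
  shows "cmod (1 - complex_of_real s2 * w) \<le> (1 - s2) + cmod (1 - w)"
proof -
  have e: "1 - complex_of_real s2 * w = complex_of_real (1 - s2) + complex_of_real s2 * (1 - w)"
    by (simp add: algebra_simps)
  have "cmod (1 - complex_of_real s2 * w) \<le> cmod (complex_of_real (1 - s2)) + cmod (complex_of_real s2 * (1 - w))"
    unfolding e by (rule norm_triangle_ineq)
  also have "\<dots> = (1 - s2) + s2 * cmod (1 - w)" using assms by (simp only: norm_mult norm_of_real)
  also have "\<dots> \<le> (1 - s2) + cmod (1 - w)" using assms by (simp add: mult_left_le_one_le)
  finally show ?thesis .
qed

lemma cdot_units: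
  "cdot (s *\<^sub>R b) (s *\<^sub>R a) = complex_of_real (s * s) * cdot b a"
  by (simp add: cdot_scaleR_left cdot_scaleR_right)

lemma unit_decomp:
  fixes c :: "complex^'n"
  assumes "c \<noteq> 0"
  shows "c = norm c *\<^sub>R (inverse (norm c) *\<^sub>R c)"
  using assms by simp

lemma cmod_swap: "cmod (1 - cdot b a) = cmod (1 - cdot a b)"
proof -
  have e: "1 - cdot b a = cnj (1 - cdot a b)" by (simp add: cdot_cnj[of b a])
  show ?thesis unfolding e by (rule complex_mod_cnj)
qed

lemma sq_sqrt_le: "(0::real) \<le> x \<Longrightarrow> 0 \<le> y \<Longrightarrow> x\<^sup>2 \<le> y\<^sup>2 \<Longrightarrow> x \<le> y"
  by (rule power2_le_imp_le)




theorem lemma2p3: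
  fixes lam :: real
  assumes "lam > 0"
  shows "\<exists>C>0. \<forall>(J::nat \<Rightarrow> nat) (zs::nat \<Rightarrow> nat \<Rightarrow> complex^'n) Q.
           bergman_tree lam J zs Q \<longrightarrow>
           (\<forall>M>0. \<forall>N\<ge>1. \<forall>j<J N. \<forall>j'<J N.
              bdist (center lam zs N j) (center lam zs N j') > M \<longrightarrow>
              sqrt (exp M - 1) * exp (- lam * real N)
                \<le> C * nbeta (inverse (norm (center lam zs N j)) *\<^sub>R center lam zs N j)
                            (inverse (norm (center lam zs N j')) *\<^sub>R center lam zs N j'))"
proof -
  define \<tau> where "\<tau> = th (lam/2)"
  define \<sigma> where "\<sigma> = sqrt (1 - \<tau>\<^sup>2)"
  define K where "K = \<sigma> / (1 - \<sigma>)"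
  define C where "C = sqrt (2 * (K + 1) * exp lam)"
  have \<tau>0: "0 < \<tau>" using assms by (simp add: \<tau>_def th_pos)
  have \<tau>1: "\<tau> < 1" by (simp add: \<tau>_def th_lt1)
  have \<sigma>0: "0 \<le> \<sigma>" unfolding \<sigma>_def using \<tau>0 \<tau>1 by (simp add: power_le_one)
  have \<sigma>1: "\<sigma> < 1" unfolding \<sigma>_def using \<tau>0 by simp
  have K0: "0 \<le> K" unfolding K_def using \<sigma>0 \<sigma>1 by simp
  have C0: "C > 0" unfolding C_def using K0 by simp
  have CC: "C\<^sup>2 = 2 * (K + 1) * exp lam" unfolding C_def using K0 by simp
  show ?thesis
  proof (intro exI[of _ C] conjI allI impI C0)
    fix J :: "nat \<Rightarrow> nat" and zs :: "nat \<Rightarrow> nat \<Rightarrow> complex^'n" and Q M N j j'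
    assume bt: "bergman_tree lam J zs Q" and M0: "0 < M" and N1: "1 \<le> N"
      and j: "j < J N" and j': "j' < J N"
      and hD: "M < bdist (center lam zs N j) (center lam zs N j')"
    define R0 where "R0 = lam * real N"
    define R1 where "R1 = lam * (real N + 1/2)"
    have R0p: "R0 > 0" unfolding R0_def using assms N1 by simp
    have R1p: "R1 > 0" unfolding R1_def using assms by simp
    have R01: "R0 \<le> R1" unfolding R0_def R1_def using assms by (simp add: algebra_simps)
    define z where "z = zs N j"
    define z' where "z' = zs N j'"
    define c where "c = center lam zs N j"
    define c' where "c' = center lam zs N j'"
    define s where "s = th R0"
    define r where "r = th R1"
    have s0: "0 < s" unfolding s_def using R0p by (rule th_pos)
    have s1: "s < 1" unfolding s_def by (rule th_lt1)
    have r1: "r < 1" unfolding r_def by (rule th_lt1)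
    have sr: "s \<le> r" unfolding s_def r_def using R01 by (rule th_mono)
    have zS: "z \<in> sphereS R0" and z'S: "z' \<in> sphereS R0"
      using bt N1 j j' unfolding bergman_tree_def z_def z'_def R0_def by auto
    have nz: "norm z = s" "norm z' = s" using zS z'S by (simp_all add: sphere_iff s_def)
    have ps0: "0 < 1 - s\<^sup>2" using s0 s1 by (simp add: power_less_one_iff abs_less_iff)
    have z0: "z \<noteq> 0" "z' \<noteq> 0" using nz s0 by auto
    obtain t where t: "t > 0" "c = t *\<^sub>R z" and cS: "c \<in> sphereS R1"
      using rayP_props[OF R1p z0(1)] unfolding c_def center_def z_def R1_def by auto
    obtain t' where t': "t' > 0" "c' = t' *\<^sub>R z'" and c'S: "c' \<in> sphereS R1"
      using rayP_props[OF R1p z0(2)] unfolding c'_def center_def z'_def R1_def by auto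
    have nc: "norm c = r" "norm c' = r" using cS c'S by (simp_all add: sphere_iff r_def)
    have c0: "c \<noteq> 0" "c' \<noteq> 0" using t t' z0 by auto
    define \<zeta> where "\<zeta> = inverse (norm z) *\<^sub>R z"
    define \<eta> where "\<eta> = inverse (norm z') *\<^sub>R z'"
    have c\<zeta>: "inverse (norm c) *\<^sub>R c = \<zeta>" unfolding \<zeta>_def t(2) using t(1) z0 by simp
    have c\<eta>: "inverse (norm c') *\<^sub>R c' = \<eta>" unfolding \<eta>_def t'(2) using t'(1) z0 by simp
    have zd: "z = s *\<^sub>R \<zeta>" "z' = s *\<^sub>R \<eta>" unfolding \<zeta>_def \<eta>_def using nz z0 s0 by simp_all
    have cd1: "c = r *\<^sub>R \<zeta>" by (metis c\<zeta> nc(1) unit_decomp[OF c0(1)])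
    have cd2: "c' = r *\<^sub>R \<eta>" by (metis c\<eta> nc(2) unit_decomp[OF c0(2)])
    note cd = cd1 cd2
    define B where "B = cmod (1 - cdot \<zeta> \<eta>)"
    have B0: "0 \<le> B" unfolding B_def by simp
    have jj: "j \<noteq> j'"
    proof
      assume "j = j'"
      then have "c' = c" unfolding c_def c'_def by simp
      then have "bdist c c' = 0" using bdist_self[of c] nc r1 by simp
      then show False using hD M0 unfolding c_def c'_def by simp
    qed
    have sep: "lam / 2 \<le> bdist z z'"
    proof (rule ccontr)
      assume "\<not> lam / 2 \<le> bdist z z'"
      then have "z' \<in> sphereS R0 \<inter> bball z (lam/2)"
        using z'S nz s1 unfolding bball_def unit_ball_def by auto
      then have "z' \<in> Q N j" using bt N1 j unfolding bergman_tree_def R0_def z_def by blast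
      moreover have "z' \<in> sphereS R0 \<inter> bball z' (lam/2)"
        using z'S nz s1 bdist_self[of z'] assms unfolding bball_def unit_ball_def by auto
      then have "z' \<in> Q N j'" using bt N1 j' unfolding bergman_tree_def R0_def z'_def by blast
      ultimately show False using bt N1 j j' jj unfolding bergman_tree_def by blast
    qed
    define u' where "u' = cmod (1 - cdot z' z)"
    have ps: "u' > 0 \<and> (norm (phi z z'))\<^sup>2 = 1 - (1 - s\<^sup>2) * (1 - s\<^sup>2) / u'\<^sup>2 \<and> norm (phi z z') < 1"
      using phi_sq[OF z0(1)] nz s1 unfolding u'_def by simp
    have "\<tau> \<le> norm (phi z z')"
      using bdist_th[of z z'] ps th_mono[OF sep] unfolding \<tau>_def by simp
    then have "\<tau>\<^sup>2 \<le> (norm (phi z z'))\<^sup>2" using \<tau>0 by (simp add: power_mono)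
    then have "(1 - s\<^sup>2) * (1 - s\<^sup>2) / u'\<^sup>2 \<le> 1 - \<tau>\<^sup>2" using ps by simp
    then have "(1 - s\<^sup>2)\<^sup>2 \<le> (1 - \<tau>\<^sup>2) * u'\<^sup>2" using ps by (simp add: divide_le_eq power2_eq_square)
    then have "(1 - s\<^sup>2)\<^sup>2 \<le> (\<sigma> * u')\<^sup>2" unfolding \<sigma>_def using \<tau>0 \<tau>1
      by (simp add: power_mult_distrib power_le_one)
    moreover have "0 \<le> 1 - s\<^sup>2" using ps0 by simp
    moreover have "0 \<le> \<sigma> * u'" using \<sigma>0 ps by simp
    ultimately have sep2: "1 - s\<^sup>2 \<le> \<sigma> * u'"
      by (rule sq_sqrt_le[rotated 2])
    have u'b: "u' \<le> (1 - s\<^sup>2) + B"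
    proof -
      have "u' = cmod (1 - complex_of_real (s\<^sup>2) * cdot \<eta> \<zeta>)"
        unfolding u'_def zd cdot_units by (simp add: power2_eq_square)
      also have "\<dots> \<le> (1 - s\<^sup>2) + cmod (1 - cdot \<eta> \<zeta>)"
        using s0 s1 by (intro cmod_bound) (simp_all add: power_le_one)
      finally show ?thesis unfolding B_def cmod_swap[of \<eta> \<zeta>] .
    qed
    have m1: "\<sigma> * u' \<le> \<sigma> * ((1 - s\<^sup>2) + B)" by (rule mult_left_mono[OF u'b \<sigma>0])
    have m2: "(1 - s\<^sup>2) * (1 - \<sigma>) = (1 - s\<^sup>2) - \<sigma> * (1 - s\<^sup>2)" by (simp add: algebra_simps)
    have m3: "\<sigma> * ((1 - s\<^sup>2) + B) = \<sigma> * (1 - s\<^sup>2) + \<sigma> * B" by (simp add: distrib_left)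
    have "(1 - s\<^sup>2) * (1 - \<sigma>) \<le> \<sigma> * B"
      using sep2 m1 m2 m3 by linarith
    then have sK: "1 - s\<^sup>2 \<le> K * B" unfolding K_def using \<sigma>1 by (simp add: field_simps)
    have rK: "1 - r\<^sup>2 \<le> K * B"
    proof -
      have "s\<^sup>2 \<le> r\<^sup>2" using power_mono[OF sr, of 2] s0 by simp
      then show ?thesis using sK by linarith
    qed
    define u where "u = cmod (1 - cdot c' c)"
    define \<rho> where "\<rho> = norm (phi c c')"
    have pc: "u > 0 \<and> \<rho>\<^sup>2 = 1 - (1 - r\<^sup>2) * (1 - r\<^sup>2) / u\<^sup>2 \<and> \<rho> < 1"
      using phi_sq[OF c0(1)] nc r1 unfolding u_def \<rho>_def by simp
    define D where "D = bdist c c'"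
    have \<rho>D: "\<rho> = th D" unfolding \<rho>_def D_def using bdist_th pc \<rho>_def by blast
    have r0: "0 < r" using s0 sr by simp
    have pr: "0 < 1 - r\<^sup>2" using r0 r1 by (simp add: power_less_one_iff)
    have e2D: "exp (2*D) = (1 + \<rho>) / (1 - \<rho>)" using th_ratio[of D] \<rho>D by simp
    have "exp (2*D) = (1 + \<rho>)\<^sup>2 / (1 - \<rho>\<^sup>2)"
    proof -
      have rho0: "0 \<le> \<rho>" unfolding \<rho>_def by simp
      have f: "1 - \<rho>\<^sup>2 = (1 - \<rho>) * (1 + \<rho>)" by (simp add: algebra_simps power2_eq_square)
      have "1 + \<rho> \<noteq> 0" using rho0 by simp
      then show ?thesis unfolding e2D f by (simp add: power2_eq_square)
    qed
    also have "\<dots> \<le> 4 / (1 - \<rho>\<^sup>2)"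
    proof -
      have "0 \<le> \<rho>" unfolding \<rho>_def by simp
      then have "1 + \<rho> \<le> 2" "0 \<le> 1 + \<rho>" using pc by simp_all
      then have "(1 + \<rho>)\<^sup>2 \<le> 2\<^sup>2" by (rule power_mono)
      then have "(1 + \<rho>)\<^sup>2 \<le> 4" by simp
      moreover have "0 < 1 - \<rho>\<^sup>2"
      proof -
        have "\<rho> < 1" using pc by blast
        then have "\<rho>\<^sup>2 < 1" using \<open>0 \<le> \<rho>\<close> by (simp add: power_less_one_iff abs_less_iff)
        then show ?thesis by simp
      qed
      ultimately show ?thesis by (simp add: divide_right_mono)
    qed
    also have "\<dots> = (2 * u / (1 - r\<^sup>2))\<^sup>2"
    proof -
      have pc2: "\<rho>\<^sup>2 = 1 - (1 - r\<^sup>2) * (1 - r\<^sup>2) / u\<^sup>2" and u0: "u > 0" using pc by blast+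
      have f: "1 - \<rho>\<^sup>2 = (1 - r\<^sup>2) * (1 - r\<^sup>2) / u\<^sup>2" unfolding pc2 by simp
      have "1 - r\<^sup>2 \<noteq> 0" using pr by simp
      then show ?thesis unfolding f using u0 by (simp add: field_simps power2_eq_square)
    qed
    finally have "(exp D)\<^sup>2 \<le> (2 * u / (1 - r\<^sup>2))\<^sup>2"
      by (metis exp_double)
    then have eD: "exp D \<le> 2 * u / (1 - r\<^sup>2)"
      by (rule sq_sqrt_le[rotated 2]) (use pc pr in simp_all)
    have ub: "u \<le> (1 - r\<^sup>2) + B"
    proof -
      have "u = cmod (1 - complex_of_real (r\<^sup>2) * cdot \<eta> \<zeta>)"
        unfolding u_def cd cdot_units by (simp add: power2_eq_square)
      also have "\<dots> \<le> (1 - r\<^sup>2) + cmod (1 - cdot \<eta> \<zeta>)"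
        using r0 r1 by (intro cmod_bound) (simp_all add: power_le_one)
      finally show ?thesis unfolding B_def cmod_swap[of \<eta> \<zeta>] .
    qed
    have "exp M - 1 \<le> exp D" using exp_less_mono[OF hD] unfolding D_def c_def c'_def by linarith
    also have "\<dots> \<le> 2 * u / (1 - r\<^sup>2)" by (rule eD)
    also have "\<dots> \<le> 2 * ((K + 1) * B) / (1 - r\<^sup>2)"
      using ub rK pr by (intro divide_right_mono) (simp_all add: algebra_simps)
    also have "\<dots> = 2 * (K + 1) * B * (1 / (1 - r\<^sup>2))" by simp
    also have "\<dots> \<le> 2 * (K + 1) * B * exp (2 * R1)"
    proof -
      have e1: "1 \<le> exp (2 * R1)" using R1p by simp
      have "1 - r \<le> 1 - r\<^sup>2" using r0 r1 by (simp add: power2_eq_square mult_left_le_one_le)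
      moreover have "1 - r = 2 / (exp (2*R1) + 1)" unfolding r_def th_eq by simp
      ultimately have "2 / (exp (2*R1) + 1) \<le> 1 - r\<^sup>2" by simp
      moreover have "1 / exp (2*R1) \<le> 2 / (exp (2*R1) + 1)" using e1
        by (simp add: field_simps add_pos_pos)
      ultimately have "1 / exp (2*R1) \<le> 1 - r\<^sup>2" by simp
      then have "1 / (1 - r\<^sup>2) \<le> exp (2 * R1)" using pr
        by (simp add: field_simps)
      then show ?thesis by (rule mult_left_mono) (use K0 B0 in simp)
    qed
    also have "\<dots> = C\<^sup>2 * B * (exp (lam * real N))\<^sup>2"
    proof -
      have "2*R1 = lam + 2*(lam*real N)" unfolding R1_def by (simp add: algebra_simps)
      then have e: "exp (2*R1) = exp lam * (exp (lam*real N))\<^sup>2" by (simp only: exp_add exp_double)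
      show ?thesis unfolding e CC by (simp add: algebra_simps)
    qed
    finally have main: "exp M - 1 \<le> (C * sqrt B * exp (lam * real N))\<^sup>2"
      using B0 by (simp add: power_mult_distrib)
    have "sqrt (exp M - 1) \<le> C * sqrt B * exp (lam * real N)"
      using main C0 B0 by (simp add: real_le_lsqrt)
    then have "sqrt (exp M - 1) * exp (- lam * real N) \<le> C * sqrt B"
      by (simp add: exp_minus field_simps)
    moreover have "nbeta (inverse (norm c) *\<^sub>R c) (inverse (norm c') *\<^sub>R c') = sqrt B"
      unfolding c\<zeta> c\<eta> nbeta_def B_def ..
    ultimately show "sqrt (exp M - 1) * exp (- lam * real N)
                \<le> C * nbeta (inverse (norm (center lam zs N j)) *\<^sub>R center lam zs N j)
                            (inverse (norm (center lam zs N j')) *\<^sub>R center lam zs N j')"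
      unfolding c_def c'_def by simp
  qed
qed


end
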